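(* Let $\mathcal H^+=\operatorname{span}_{\mathbb C}\{t^l_{nm}(Z)\}$ and $\mathcal H^-=\operatorname{span}_{\mathbb C}\{t^l_{nm}(Z)\,N(Z)^{-(2l+1)}\}$ (over all $l\in\{0,\frac12,1,\dots\}$, $m,n\in\{-l,\dots,l\}$). Then, with $\mathrm{Zh}^\pm,\mathrm{Zh}^0$ as defined below: (1) the linear span of all products $\phi_1\phi_2$ with $\phi_1,\phi_2\in\mathcal H^+$ equals $\mathrm{Zh}^+$; (2) the linear span of all products $\phi_1\phi_2$ with $\phi_1,\phi_2\in\mathcal H^-$ equals $\mathrm{Zh}^-$; (3) the linear span of all products $\phi_1\phi_2$ with $\phi_1\in\mathcal H^-$, $\phi_2\in\mathcal H^+$ equals $\mathrm{Zh}^0$.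
   Context: $\mathbb H_{\mathbb C}$ is identified with complex $2\times2$ matrices $Z=(z_{ij})$, $N(Z)=\det Z$, and $t^l_{nm}(Z)=\frac1{2\pi i}\oint (sz_{11}+z_{21})^{l-m}(sz_{12}+z_{22})^{l+m}s^{-l+n}\,\frac{ds}{s}$ (loop once counterclockwise around $0$), for $l\in\{0,\frac12,1,\dots\}$, $m,n\in\mathbb Z+l$, $-l\le m,n\le l$. ($\mathcal H^+$ is the space of holomorphic harmonic polynomials on $\mathbb H_{\mathbb C}$, and $\mathcal H^-$ its counterpart regular at infinity.) In $\mathrm{Zh}=\mathbb C[z_{11},z_{12},z_{21},z_{22},N(Z)^{-1}]$: $\mathrm{Zh}^+=\operatorname{span}\{t^l_{nm}N^k: k\ge0\}$, $\mathrm{Zh}^-=\operatorname{span}\{t^l_{nm}N^k: k\le-(2l+2)\}$, $\mathrm{Zh}^0=\operatorname{span}\{t^l_{nm}N^k: -(2l+1)\le k\le-1\}$, $k\in\mathbb Z$. *)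

theory Defs
  imports "HOL-Analysis.Analysis" "HOL-Computational_Algebra.Polynomial"
begin

text \<open>Complex 2x2 matrices Z, with z_ij = Z$i$j.  Functions on them with values in complex.\<close>

type_synonym cmat = "complex^2^2"

definition N :: "cmat \<Rightarrow> complex" where
  "N Z = det Z"

definition cspan :: "('a \<Rightarrow> complex) set \<Rightarrow> ('a \<Rightarrow> complex) set" where
  "cspan S = {f. \<exists>T c. finite T \<and> T \<subseteq> S \<and> f = (\<lambda>x. \<Sum>g\<in>T. c g * g x)}"

definition prodspan :: "('a \<Rightarrow> complex) set \<Rightarrow> ('a \<Rightarrow> complex) set \<Rightarrow> ('a \<Rightarrow> complex) set" where
  "prodspan A B = cspan {(\<lambda>x. f x * g x) | f g. f \<in> A \<and> g \<in> B}"

text \<open>Matrix coefficient t^l_{nm}(Z), indexed by L = 2l, p = l - m, r = l - n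
  (so 0 <= p, r <= L).  The contour integral
  (1/2 pi i) \<oint> (s z11 + z21)^(l-m) (s z12 + z22)^(l+m) s^(-l+n) ds/s
  is exactly the coefficient of s^(l-n) in the polynomial
  (s z11 + z21)^(l-m) (s z12 + z22)^(l+m).\<close>
definition t :: "nat \<Rightarrow> nat \<Rightarrow> nat \<Rightarrow> cmat \<Rightarrow> complex" where
  "t L p r Z = coeff ([:Z$2$1, Z$1$1:] ^ p * [:Z$2$2, Z$1$2:] ^ (L - p)) r"

definition Hplus :: "(cmat \<Rightarrow> complex) set" where
  "Hplus = cspan {t L p r | L p r. p \<le> L \<and> r \<le> L}"

definition Hminus :: "(cmat \<Rightarrow> complex) set" where
  "Hminus = cspan {(\<lambda>Z. t L p r Z * N Z powi (- (int L + 1))) | L p r. p \<le> L \<and> r \<le> L}"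

definition Zh_plus :: "(cmat \<Rightarrow> complex) set" where
  "Zh_plus = cspan {(\<lambda>Z. t L p r Z * N Z powi k) | L p r k. p \<le> L \<and> r \<le> L \<and> 0 \<le> k}"

definition Zh_minus :: "(cmat \<Rightarrow> complex) set" where
  "Zh_minus = cspan {(\<lambda>Z. t L p r Z * N Z powi k) | L p r k.
      p \<le> L \<and> r \<le> L \<and> k \<le> - (int L + 2)}"

definition Zh_zero :: "(cmat \<Rightarrow> complex) set" where
  "Zh_zero = cspan {(\<lambda>Z. t L p r Z * N Z powi k) | L p r k.
      p \<le> L \<and> r \<le> L \<and> - (int L + 1) \<le> k \<and> k \<le> -1}"

end

theory Submission
  imports Defs
begin


definition AA :: "cmat \<Rightarrow> complex poly" where "AA Z = [:Z$2$1, Z$1$1:]"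
definition BB :: "cmat \<Rightarrow> complex poly" where "BB Z = [:Z$2$2, Z$1$2:]"

lemma t_AB: "t L p r Z = coeff (AA Z ^ p * BB Z ^ (L - p)) r"
  by (simp add: t_def AA_def BB_def)

lemma N_eq: "N Z = Z$1$1 * Z$2$2 - Z$1$2 * Z$2$1"
  by (simp add: N_def det_2)

lemma key1: "[:Z$1$1:] * BB Z - [:Z$1$2:] * AA Z = [:N Z:]"
  by (simp add: AA_def BB_def N_eq algebra_simps)

lemma key2: "[:Z$2$2:] * AA Z - [:Z$2$1:] * BB Z = [:0, N Z:]"
  by (simp add: AA_def BB_def N_eq algebra_simps)

lemma pdA: "pderiv (AA Z) = [:Z$1$1:]" by (simp add: AA_def pderiv_pCons)
lemma pdB: "pderiv (BB Z) = [:Z$1$2:]" by (simp add: BB_def pderiv_pCons)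


lemma smult_as: "smult c p = [:c:] * p" by simp
lemma const_mult: "[:x * y:] = [:x:] * [:y::'a::comm_ring_1:]" by simp
lemma const_of_nat: "[:of_nat k * y:] = of_nat k * [:y::'a::comm_ring_1:]"
  by (simp add: of_nat_poly)

lemma poly11: "[:of_nat (p+q+1) * Z$1$1:] * (AA Z^p*BB Z^q) =
   pderiv (AA Z^(Suc p) * BB Z^q) + [:of_nat q * N Z:] * (AA Z^p * BB Z^(q-1))"
proof (cases q)
  case 0 then show ?thesis by (simp add: pderiv_power_Suc pdA const_of_nat algebra_simps del: power_Suc)
next
  case (Suc q')
  have k: "[:N Z:] = [:Z$1$1:] * BB Z - [:Z$1$2:] * AA Z" using key1 by simp
  show ?thesis unfolding Suc
    apply (simp only: pderiv_mult pderiv_power_Suc pdA pdB diff_Suc_1)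
    apply (simp only: smult_as const_of_nat k of_nat_poly[symmetric])
    apply (simp only: power_Suc of_nat_Suc of_nat_add)
    by (simp only: algebra_simps of_nat_1 one_add_one[symmetric])
qed

lemma poly12: "[:of_nat (p+q+1) * Z$1$2:] * (AA Z^p*BB Z^q) =
   pderiv (AA Z^p * BB Z^(Suc q)) - [:of_nat p * N Z:] * (AA Z^(p-1) * BB Z^q)"
proof (cases p)
  case 0 then show ?thesis by (simp add: pderiv_power_Suc pdB const_of_nat algebra_simps del: power_Suc)
next
  case (Suc p')
  have k: "[:N Z:] = [:Z$1$1:] * BB Z - [:Z$1$2:] * AA Z" using key1 by simp
  show ?thesis unfolding Suc
    apply (simp only: pderiv_mult pderiv_power_Suc pdA pdB diff_Suc_1)
    apply (simp only: smult_as const_of_nat k of_nat_poly[symmetric])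
    apply (simp only: power_Suc of_nat_Suc of_nat_add)
    by (simp only: algebra_simps of_nat_1 one_add_one[symmetric])
qed


lemma coeff_A_mult: "coeff (AA Z * F) s = Z$2$1 * coeff F s + (if s = 0 then 0 else Z$1$1 * coeff F (s-1))"
  by (cases s) (simp_all add: AA_def)
lemma coeff_B_mult: "coeff (BB Z * F) s = Z$2$2 * coeff F s + (if s = 0 then 0 else Z$1$2 * coeff F (s-1))"
  by (cases s) (simp_all add: BB_def)

lemma degA: "degree (AA Z) \<le> 1" by (simp add: AA_def)
lemma degB: "degree (BB Z) \<le> 1" by (simp add: BB_def)

lemma deg_AB: "degree (AA Z ^ a * BB Z ^ b) \<le> a + b"
proof -
  have "degree (AA Z ^ a) \<le> a"
    proof -
    have "degree (AA Z) * a \<le> 1 * a" by (rule mult_le_mono1[OF degA])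
    then show ?thesis using degree_power_le[of "AA Z" a] by linarith
  qed
  moreover have "degree (BB Z ^ b) \<le> b"
    proof -
    have "degree (BB Z) * b \<le> 1 * b" by (rule mult_le_mono1[OF degB])
    then show ?thesis using degree_power_le[of "BB Z" b] by linarith
  qed
  ultimately show ?thesis using degree_mult_le[of "AA Z ^ a" "BB Z ^ b"] by linarith
qed

lemma t_high: "q \<le> M \<Longrightarrow> M < s \<Longrightarrow> t M q s Z = 0"
  unfolding t_AB using deg_AB[of Z q "M-q"] by (intro coeff_eq_0) simp

lemma coeff_cmult: "coeff ([:c:] * F) s = c * coeff F s" by simp

lemma t_z11: assumes "p \<le> M"
  shows "of_nat (M+1) * Z$1$1 * t M p s Z = of_nat (s+1) * t (M+1) (p+1) (s+1) Z + of_nat (M-p) * N Z * t (M-1) p s Z"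
proof -
  have "coeff ([:of_nat (p+(M-p)+1) * Z$1$1:] * (AA Z^p*BB Z^(M-p))) s =
   coeff (pderiv (AA Z^(Suc p) * BB Z^(M-p)) + [:of_nat (M-p) * N Z:] * (AA Z^p * BB Z^((M-p)-1))) s"
    by (simp only: poly11)
  then have e: "of_nat (p+(M-p)+1) * Z$1$1 * coeff (AA Z^p*BB Z^(M-p)) s =
    of_nat (Suc s) * coeff (AA Z^(Suc p) * BB Z^(M-p)) (Suc s) + of_nat (M-p) * N Z * coeff (AA Z^p * BB Z^((M-p)-1)) s"
    by (simp only: coeff_cmult coeff_add coeff_pderiv)
  have e1: "p+(M-p)+1 = M+1" using assms by simp
  have e2: "coeff (AA Z^(Suc p) * BB Z^(M-p)) (Suc s) = t (M+1) (p+1) (s+1) Z"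
  proof -
    have h: "M+1-(p+1) = M - p" by simp
    show ?thesis unfolding t_AB h by (simp only: Suc_eq_plus1)
  qed
  have e3: "M - p - 1 = M - 1 - p" by simp
  have e4: "coeff (AA Z^p * BB Z^((M-p)-1)) s = t (M-1) p s Z"
    unfolding t_AB e3 ..
  have e0: "coeff (AA Z^p*BB Z^(M-p)) s = t M p s Z" by (simp only: t_AB)
  have e5: "of_nat (Suc s) = (of_nat (s+1)::complex)" by simp
  show ?thesis using e unfolding e0 e1 e2 e4 e5 .
qed

lemma t_z12: assumes "p \<le> M"
  shows "of_nat (M+1) * Z$1$2 * t M p s Z = of_nat (s+1) * t (M+1) p (s+1) Z - of_nat p * N Z * t (M-1) (p-1) s Z"
proof -
  have "coeff ([:of_nat (p+(M-p)+1) * Z$1$2:] * (AA Z^p*BB Z^(M-p))) s =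
   coeff (pderiv (AA Z^p * BB Z^(Suc (M-p))) - [:of_nat p * N Z:] * (AA Z^(p-1) * BB Z^(M-p))) s"
    by (simp only: poly12)
  then have e: "of_nat (p+(M-p)+1) * Z$1$2 * coeff (AA Z^p*BB Z^(M-p)) s =
    of_nat (Suc s) * coeff (AA Z^p * BB Z^(Suc (M-p))) (Suc s) - of_nat p * N Z * coeff (AA Z^(p-1) * BB Z^(M-p)) s"
    by (simp only: coeff_cmult coeff_diff coeff_pderiv)
  have e1: "p+(M-p)+1 = M+1" using assms by simp
  have e2: "coeff (AA Z^p * BB Z^(Suc (M-p))) (Suc s) = t (M+1) p (s+1) Z"
  proof -
    have h: "Suc (M-p) = M + 1 - p" using assms by simp
    show ?thesis unfolding t_AB h by (simp only: Suc_eq_plus1)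
  qed
  have e4: "of_nat p * N Z * coeff (AA Z^(p-1) * BB Z^(M-p)) s = of_nat p * N Z * t (M - 1) (p - 1) s Z"
  proof (cases "p = 0")
    case False
    then have h: "M - 1 - (p - 1) = M - p" by simp
    show ?thesis unfolding t_AB h ..
  qed simp
  have e0: "coeff (AA Z^p*BB Z^(M-p)) s = t M p s Z" by (simp only: t_AB)
  have e5: "of_nat (Suc s) = (of_nat (s+1)::complex)" by simp
  show ?thesis using e unfolding e0 e1 e2 e4 e5 .
qed

lemma t_z21: assumes "p \<le> M"
  shows "t (M+1) (p+1) s Z = Z$2$1 * t M p s Z + (if s = 0 then 0 else Z$1$1 * t M p (s-1) Z)"
proof -
  have "AA Z ^ (p+1) * BB Z ^ (M+1-(p+1)) = AA Z * (AA Z ^ p * BB Z ^ (M - p))" by simp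
  then show ?thesis unfolding t_AB by (simp only: coeff_A_mult)
qed

lemma t_z22: assumes "p \<le> M"
  shows "t (M+1) p s Z = Z$2$2 * t M p s Z + (if s = 0 then 0 else Z$1$2 * t M p (s-1) Z)"
proof -
  have "AA Z ^ p * BB Z ^ (M+1-p) = BB Z * (AA Z ^ p * BB Z ^ (M - p))" using assms
    by (simp add: Suc_diff_le algebra_simps)
  then show ?thesis unfolding t_AB by (simp only: coeff_B_mult)
qed

lemma t_zero: "t 0 0 r Z = (if r = 0 then 1 else 0)"
  by (simp add: t_AB)

lemma t_top: "t (a+b) a (a+b) Z = Z$1$1^a * Z$1$2^b"
proof -
  have "coeff (AA Z ^ a * BB Z ^ b) (a+b) = Z$1$1^a * Z$1$2^b"
  proof (induction a)
    case 0
    show ?case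
    proof (induction b)
      case (Suc b)
      have "coeff (BB Z ^ b) (Suc b) = 0" using deg_AB[of Z 0 b] by (intro coeff_eq_0) simp
      then show ?case using Suc by (simp add: coeff_B_mult)
    qed simp
  next
    case (Suc a)
    have "coeff (AA Z ^ a * BB Z ^ b) (Suc (a+b)) = 0" using deg_AB[of Z a b] by (intro coeff_eq_0) simp
    then show ?case using Suc by (simp add: coeff_A_mult mult.assoc)
  qed
  then show ?thesis by (simp add: t_AB)
qed

lemma t_bot: "t (c+e) c 0 Z = Z$2$1^c * Z$2$2^e"
  by (simp add: t_AB coeff_mult coeff_0_power AA_def BB_def)

lemma t_split: assumes "p1 \<le> L" "p2 \<le> L'"
  shows "t (L+L') (p1+p2) s Z = (\<Sum>i\<le>s. t L p1 i Z * t L' p2 (s-i) Z)"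
proof -
  have "AA Z ^ (p1+p2) * BB Z ^ (L+L'-(p1+p2)) = (AA Z ^ p1 * BB Z ^ (L-p1)) * (AA Z ^ p2 * BB Z ^ (L'-p2))"
  proof -
    have e: "L+L'-(p1+p2) = (L-p1) + (L'-p2)" using assms by simp
    show ?thesis unfolding e power_add by (simp only: ac_simps)
  qed
  then show ?thesis unfolding t_AB by (simp only: coeff_mult)
qed



lemma cspanI: "finite T \<Longrightarrow> T \<subseteq> S \<Longrightarrow> f = (\<lambda>x. \<Sum>g\<in>T. c g * g x) \<Longrightarrow> f \<in> cspan S"
  unfolding cspan_def
  apply (rule CollectI)
  apply (rule exI[where x=T])
  apply (rule exI[where x=c])
  apply (intro conjI)
  apply assumption+
  done

lemma cspanE: assumes "f \<in> cspan S"
  obtains T c where "finite T" "T \<subseteq> S" "f = (\<lambda>x. \<Sum>g\<in>T. c g * g x)"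
  using assms unfolding cspan_def
  apply -
  apply (erule CollectE exE conjE)+
  apply assumption
  done

lemma cspan_zero: "(\<lambda>_. 0) \<in> cspan S"
  by (rule cspanI[where T="{}" and c="\<lambda>_. 0"]) simp_all

lemma cspan_base: "g \<in> S \<Longrightarrow> g \<in> cspan S"
  by (rule cspanI[where T="{g}" and c="\<lambda>_. 1"]) simp_all

lemma cspan_scale: "f \<in> cspan S \<Longrightarrow> (\<lambda>x. a * f x) \<in> cspan S"
proof -
  assume "f \<in> cspan S"
  then obtain T c where T: "finite T" "T \<subseteq> S" "f = (\<lambda>x. \<Sum>g\<in>T. c g * g x)"
    by (rule cspanE)
  have "(\<lambda>x. a * f x) = (\<lambda>x. \<Sum>g\<in>T. (a * c g) * g x)"
    using T(3) by (simp add: sum_distrib_left mult.assoc)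
  then show ?thesis using T by (intro cspanI[where T=T and c="\<lambda>g. a * c g"])
qed

lemma cspan_add: "f \<in> cspan S \<Longrightarrow> h \<in> cspan S \<Longrightarrow> (\<lambda>x. f x + h x) \<in> cspan S"
proof -
  assume "f \<in> cspan S" "h \<in> cspan S"
  obtain T1 c1 where T1: "finite T1" "T1 \<subseteq> S" "f = (\<lambda>x. \<Sum>g\<in>T1. c1 g * g x)"
    using \<open>f \<in> cspan S\<close> by (rule cspanE)
  obtain T2 c2 where T2: "finite T2" "T2 \<subseteq> S" "h = (\<lambda>x. \<Sum>g\<in>T2. c2 g * g x)"
    using \<open>h \<in> cspan S\<close> by (rule cspanE)
  define c where "c g = (if g \<in> T1 then c1 g else 0) + (if g \<in> T2 then c2 g else 0)" for g
  have s1: "(\<Sum>g\<in>T1 \<union> T2. (if g \<in> T1 then c1 g else 0) * g x) = (\<Sum>g\<in>T1. c1 g * g x)" for x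
    using T1 T2 by (intro sum.mono_neutral_cong_right) auto
  have s2: "(\<Sum>g\<in>T1 \<union> T2. (if g \<in> T2 then c2 g else 0) * g x) = (\<Sum>g\<in>T2. c2 g * g x)" for x
    using T1 T2 by (intro sum.mono_neutral_cong_right) auto
  have "(\<Sum>g\<in>T1 \<union> T2. c g * g x) = (\<Sum>g\<in>T1 \<union> T2. (if g \<in> T1 then c1 g else 0) * g x)
     + (\<Sum>g\<in>T1 \<union> T2. (if g \<in> T2 then c2 g else 0) * g x)" for x
    unfolding c_def distrib_right sum.distrib ..
  then have "(\<lambda>x. f x + h x) = (\<lambda>x. \<Sum>g\<in>T1 \<union> T2. c g * g x)"
    unfolding s1 s2 T1(3) T2(3) by simp
  moreover have "finite (T1 \<union> T2)" "T1 \<union> T2 \<subseteq> S" using T1 T2 by auto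
  ultimately show ?thesis by (intro cspanI[where T="T1 \<union> T2" and c=c])
qed

lemma cspan_diff: "f \<in> cspan S \<Longrightarrow> h \<in> cspan S \<Longrightarrow> (\<lambda>x. f x - h x) \<in> cspan S"
  using cspan_add[of f S "\<lambda>x. (-1) * h x"] cspan_scale[of h S "-1"] by simp

lemma cspan_sum: "finite I \<Longrightarrow> (\<And>i. i \<in> I \<Longrightarrow> f i \<in> cspan S) \<Longrightarrow> (\<lambda>x. \<Sum>i\<in>I. f i x) \<in> cspan S"
proof (induction I rule: finite_induct)
  case empty then show ?case using cspan_zero by simp
next
  case (insert i I)
  then show ?case using cspan_add[of "f i" S "\<lambda>x. \<Sum>i\<in>I. f i x"] by simp
qed

lemma cspan_mult:
  assumes "\<And>g. g \<in> S \<Longrightarrow> (\<lambda>x. h x * g x) \<in> cspan T" "f \<in> cspan S"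
  shows "(\<lambda>x. h x * f x) \<in> cspan T"
proof -
  obtain T0 c where T0: "finite T0" "T0 \<subseteq> S" "f = (\<lambda>x. \<Sum>g\<in>T0. c g * g x)"
    using assms(2) by (rule cspanE)
  have "(\<lambda>x. h x * f x) = (\<lambda>x. \<Sum>g\<in>T0. c g * (h x * g x))"
    using T0(3) by (simp add: sum_distrib_left ac_simps)
  moreover have "(\<lambda>x. \<Sum>g\<in>T0. c g * (h x * g x)) \<in> cspan T"
  proof (rule cspan_sum[OF T0(1)])
    fix g assume "g \<in> T0"
    then have "(\<lambda>x. h x * g x) \<in> cspan T" using T0(2) assms(1) by blast
    then show "(\<lambda>x. c g * (h x * g x)) \<in> cspan T" by (rule cspan_scale)
  qed
  ultimately show ?thesis by simp
qed

lemma cspan_subset: "A \<subseteq> cspan B \<Longrightarrow> cspan A \<subseteq> cspan B"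
proof
  fix f assume "A \<subseteq> cspan B" "f \<in> cspan A"
  then have "\<And>g. g \<in> A \<Longrightarrow> (\<lambda>x. 1 * g x) \<in> cspan B" by auto
  from cspan_mult[OF this \<open>f \<in> cspan A\<close>] have "(\<lambda>x. 1 * f x) \<in> cspan B" .
  then show "f \<in> cspan B" by simp
qed

lemma cspan_mono: "A \<subseteq> B \<Longrightarrow> cspan A \<subseteq> cspan B"
  by (rule cspan_subset) (auto intro: cspan_base)

lemma prodspan_cspan: "prodspan (cspan A) (cspan B) = cspan {(\<lambda>x. f x * g x) | f g. f \<in> A \<and> g \<in> B}"
proof
  let ?P = "{(\<lambda>x. f x * g x) | f g. f \<in> A \<and> g \<in> B}"
  have "{(\<lambda>x. f x * g x) | f g. f \<in> cspan A \<and> g \<in> cspan B} \<subseteq> cspan ?P"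
  proof
    fix F assume "F \<in> {(\<lambda>x. f x * g x) | f g. f \<in> cspan A \<and> g \<in> cspan B}"
    then obtain f g where F: "F = (\<lambda>x. f x * g x)" and f: "f \<in> cspan A" and g: "g \<in> cspan B"
      by blast
    have "(\<lambda>x. f x * b x) \<in> cspan ?P" if b: "b \<in> B" for b
    proof -
      have "(\<lambda>x. b x * a x) \<in> cspan ?P" if "a \<in> A" for a
      proof (rule cspan_base)
        have "(\<lambda>x. b x * a x) = (\<lambda>x. a x * b x)" by (simp add: mult.commute)
        then show "(\<lambda>x. b x * a x) \<in> ?P" using that b by blast
      qed
      from cspan_mult[OF this f] show ?thesis by (simp add: mult.commute)
    qed
    from cspan_mult[OF this g] show "F \<in> cspan ?P" unfolding F .
  qed
  then show "prodspan (cspan A) (cspan B) \<subseteq> cspan ?P"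
    unfolding prodspan_def by (rule cspan_subset)
  have "?P \<subseteq> {(\<lambda>x. f x * g x) | f g. f \<in> cspan A \<and> g \<in> cspan B}"
    using cspan_base by blast
  then show "cspan ?P \<subseteq> prodspan (cspan A) (cspan B)"
    unfolding prodspan_def by (rule cspan_mono)
qed



definition SS :: "nat \<Rightarrow> nat \<Rightarrow> (cmat \<Rightarrow> complex) set" where
  "SS D J = cspan {(\<lambda>Z. t M q s Z * N Z ^ j) | M q s j. q \<le> M \<and> s \<le> M \<and> M + 2*j = D \<and> j \<le> J}"

lemma gen_SS: assumes "q \<le> M" "M + 2*j = D" "j \<le> J"
  shows "(\<lambda>Z. t M q s Z * N Z ^ j) \<in> SS D J"
proof (cases "s \<le> M")
  case True
  then show ?thesis unfolding SS_def using assms by (intro cspan_base) blast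
next
  case False
  then have "(\<lambda>Z. t M q s Z * N Z ^ j) = (\<lambda>_. 0)" using assms t_high by fastforce
  then show ?thesis unfolding SS_def using cspan_zero by metis
qed

lemma scale0: "b = 0 \<or> f \<in> cspan S \<Longrightarrow> (\<lambda>x. b * f x) \<in> cspan S"
  using cspan_scale[of f S b] cspan_zero[of S] by auto

lemma z11_SS: assumes "q \<le> M" "M + 2*j + 1 = D" "j + 1 \<le> J"
  shows "(\<lambda>Z. Z$1$1 * (t M q s Z * N Z ^ j)) \<in> SS D J"
proof -
  define a where "a = (of_nat (s+1) / of_nat (M+1) :: complex)"
  define b where "b = (of_nat (M-q) / of_nat (M+1) :: complex)"
  have "Z$1$1 * (t M q s Z * N Z ^ j) = a * (t (M+1) (q+1) (s+1) Z * N Z ^ j) + b * (t (M-1) q s Z * N Z ^ (j+1))" for Z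
  proof -
    have nz: "(of_nat (M+1)::complex) \<noteq> 0" "(1 + of_nat M::complex) \<noteq> 0" "(of_nat M + 1::complex) \<noteq> 0"
      using of_nat_neq_0[of M, where 'a=complex] by (simp_all add: add.commute)
    have h: "of_nat (M+1) * Z$1$1 * t M q s Z = of_nat (s+1) * t (M+1) (q+1) (s+1) Z + of_nat (M-q) * N Z * t (M-1) q s Z"
      by (rule t_z11[OF assms(1)])
    have "Z$1$1 * t M q s Z = (of_nat (s+1) * t (M+1) (q+1) (s+1) Z + of_nat (M-q) * N Z * t (M-1) q s Z) / of_nat (M+1)"
      apply (rule iffD2[OF nonzero_eq_divide_eq[OF nz(1)]])
      using h by (simp only: ac_simps)
    then have "Z$1$1 * t M q s Z * N Z ^ j = (of_nat (s+1) * t (M+1) (q+1) (s+1) Z + of_nat (M-q) * N Z * t (M-1) q s Z) / of_nat (M+1) * N Z ^ j"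
      by simp
    then show ?thesis unfolding a_def b_def by (simp add: add_divide_distrib algebra_simps)
  qed
  then have e: "(\<lambda>Z. Z$1$1 * (t M q s Z * N Z ^ j)) = (\<lambda>Z. a * (t (M+1) (q+1) (s+1) Z * N Z ^ j) + b * (t (M-1) q s Z * N Z ^ (j+1)))"
    by (rule ext)
  have 1: "(\<lambda>Z. t (M+1) (q+1) (s+1) Z * N Z ^ j) \<in> SS D J" using assms by (intro gen_SS) auto
  have 2: "b = 0 \<or> (\<lambda>Z. t (M-1) q s Z * N Z ^ (j+1)) \<in> SS D J"
  proof (cases "q < M")
    case True then show ?thesis using assms by (intro disjI2 gen_SS) auto
  qed (use assms in \<open>simp add: b_def\<close>)
  show ?thesis unfolding e SS_def
    by (rule cspan_add) (use 1 2 in \<open>auto simp: SS_def intro: cspan_scale scale0\<close>)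
qed


lemma z12_SS: assumes "q \<le> M" "M + 2*j + 1 = D" "j + 1 \<le> J"
  shows "(\<lambda>Z. Z$1$2 * (t M q s Z * N Z ^ j)) \<in> SS D J"
proof -
  define a where "a = (of_nat (s+1) / of_nat (M+1) :: complex)"
  define b where "b = (of_nat q / of_nat (M+1) :: complex)"
  have "Z$1$2 * (t M q s Z * N Z ^ j) = a * (t (M+1) q (s+1) Z * N Z ^ j) - b * (t (M-1) (q-1) s Z * N Z ^ (j+1))" for Z
  proof -
    have nz: "(of_nat (M+1)::complex) \<noteq> 0"
      using of_nat_neq_0[of M, where 'a=complex] by simp
    have h: "of_nat (M+1) * Z$1$2 * t M q s Z = of_nat (s+1) * t (M+1) q (s+1) Z - of_nat q * N Z * t (M-1) (q-1) s Z"
      by (rule t_z12[OF assms(1)])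
    have "Z$1$2 * t M q s Z = (of_nat (s+1) * t (M+1) q (s+1) Z - of_nat q * N Z * t (M-1) (q-1) s Z) / of_nat (M+1)"
      apply (rule iffD2[OF nonzero_eq_divide_eq[OF nz(1)]])
      using h by (simp only: ac_simps)
    then have "Z$1$2 * t M q s Z * N Z ^ j = (of_nat (s+1) * t (M+1) q (s+1) Z - of_nat q * N Z * t (M-1) (q-1) s Z) / of_nat (M+1) * N Z ^ j"
      by simp
    then show ?thesis unfolding a_def b_def by (simp add: diff_divide_distrib algebra_simps)
  qed
  then have e: "(\<lambda>Z. Z$1$2 * (t M q s Z * N Z ^ j)) = (\<lambda>Z. a * (t (M+1) q (s+1) Z * N Z ^ j) - b * (t (M-1) (q-1) s Z * N Z ^ (j+1)))"
    by (rule ext)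
  have 1: "(\<lambda>Z. t (M+1) q (s+1) Z * N Z ^ j) \<in> SS D J" using assms by (intro gen_SS) auto
  have 2: "b = 0 \<or> (\<lambda>Z. t (M-1) (q-1) s Z * N Z ^ (j+1)) \<in> SS D J"
  proof (cases "q > 0")
    case True then show ?thesis using assms by (intro disjI2 gen_SS) auto
  qed (use assms in \<open>simp add: b_def\<close>)
  show ?thesis unfolding e SS_def
    by (rule cspan_diff) (use 1 2 in \<open>auto simp: SS_def intro: cspan_scale scale0\<close>)
qed

lemma z21_SS: assumes "q \<le> M" "M + 2*j + 1 = D" "j + 1 \<le> J"
  shows "(\<lambda>Z. Z$2$1 * (t M q s Z * N Z ^ j)) \<in> SS D J"
proof -
  have 1: "(\<lambda>Z. t (M+1) (q+1) s Z * N Z ^ j) \<in> SS D J" using assms by (intro gen_SS) auto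
  show ?thesis
  proof (cases "s = 0")
    case True
    then have "(\<lambda>Z. Z$2$1 * (t M q s Z * N Z ^ j)) = (\<lambda>Z. t (M+1) (q+1) s Z * N Z ^ j)"
      using t_z21[OF assms(1)] by (simp add: fun_eq_iff)
    then show ?thesis using 1 by simp
  next
    case False
    then have "(\<lambda>Z. Z$2$1 * (t M q s Z * N Z ^ j)) = (\<lambda>Z. t (M+1) (q+1) s Z * N Z ^ j - Z$1$1 * (t M q (s-1) Z * N Z ^ j))"
      using t_z21[OF assms(1)] by (simp add: fun_eq_iff algebra_simps)
    moreover have "(\<lambda>Z. Z$1$1 * (t M q (s-1) Z * N Z ^ j)) \<in> SS D J" using assms by (rule z11_SS)
    ultimately show ?thesis using 1 unfolding SS_def by (simp add: cspan_diff)
  qed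
qed

lemma z22_SS: assumes "q \<le> M" "M + 2*j + 1 = D" "j + 1 \<le> J"
  shows "(\<lambda>Z. Z$2$2 * (t M q s Z * N Z ^ j)) \<in> SS D J"
proof -
  have 1: "(\<lambda>Z. t (M+1) q s Z * N Z ^ j) \<in> SS D J" using assms by (intro gen_SS) auto
  show ?thesis
  proof (cases "s = 0")
    case True
    then have "(\<lambda>Z. Z$2$2 * (t M q s Z * N Z ^ j)) = (\<lambda>Z. t (M+1) q s Z * N Z ^ j)"
      using t_z22[OF assms(1)] by (simp add: fun_eq_iff)
    then show ?thesis using 1 by simp
  next
    case False
    then have "(\<lambda>Z. Z$2$2 * (t M q s Z * N Z ^ j)) = (\<lambda>Z. t (M+1) q s Z * N Z ^ j - Z$1$2 * (t M q (s-1) Z * N Z ^ j))"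
      using t_z22[OF assms(1)] by (simp add: fun_eq_iff algebra_simps)
    moreover have "(\<lambda>Z. Z$1$2 * (t M q (s-1) Z * N Z ^ j)) \<in> SS D J" using assms by (rule z12_SS)
    ultimately show ?thesis using 1 unfolding SS_def by (simp add: cspan_diff)
  qed
qed

lemma SS_mult:
  assumes "\<And>M q s j. q \<le> M \<Longrightarrow> M + 2*j + 1 = Suc D \<Longrightarrow> j + 1 \<le> Suc J \<Longrightarrow> (\<lambda>Z. h Z * (t M q s Z * N Z ^ j)) \<in> SS (Suc D) (Suc J)"
    and "f \<in> SS D J"
  shows "(\<lambda>Z. h Z * f Z) \<in> SS (Suc D) (Suc J)"
proof -
  have "(\<lambda>Z. h Z * g Z) \<in> SS (Suc D) (Suc J)"
    if "g \<in> {(\<lambda>Z. t M q s Z * N Z ^ j) | M q s j. q \<le> M \<and> s \<le> M \<and> M + 2*j = D \<and> j \<le> J}" for g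
  proof -
    from that obtain M q s j where g: "g = (\<lambda>Z. t M q s Z * N Z ^ j)" "q \<le> M" "M + 2*j = D" "j \<le> J"
      by blast
    show ?thesis unfolding g(1) using g(2-4) by (intro assms(1)) auto
  qed
  then show ?thesis using assms(2) unfolding SS_def[of D J] SS_def[of "Suc D" "Suc J"]
    by (rule cspan_mult)
qed

lemma SS_z11: "f \<in> SS D J \<Longrightarrow> (\<lambda>Z. Z$1$1 * f Z) \<in> SS (Suc D) (Suc J)"
  by (rule SS_mult[OF z11_SS])
lemma SS_z12: "f \<in> SS D J \<Longrightarrow> (\<lambda>Z. Z$1$2 * f Z) \<in> SS (Suc D) (Suc J)"
  by (rule SS_mult[OF z12_SS])
lemma SS_z21: "f \<in> SS D J \<Longrightarrow> (\<lambda>Z. Z$2$1 * f Z) \<in> SS (Suc D) (Suc J)"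
  by (rule SS_mult[OF z21_SS])
lemma SS_z22: "f \<in> SS D J \<Longrightarrow> (\<lambda>Z. Z$2$2 * f Z) \<in> SS (Suc D) (Suc J)"
  by (rule SS_mult[OF z22_SS])

lemma SS_add: "f \<in> SS D J \<Longrightarrow> g \<in> SS D J \<Longrightarrow> (\<lambda>Z. f Z + g Z) \<in> SS D J"
  unfolding SS_def by (rule cspan_add)

lemma SS_mono: assumes "J \<le> J'" shows "SS D J \<subseteq> SS D J'"
  unfolding SS_def
proof (rule cspan_mono, rule subsetI)
  fix g assume "g \<in> {(\<lambda>Z. t M q s Z * N Z ^ j) | M q s j. q \<le> M \<and> s \<le> M \<and> M + 2*j = D \<and> j \<le> J}"
  then obtain M q s j where g: "g = (\<lambda>Z. t M q s Z * N Z ^ j)" "q \<le> M" "s \<le> M" "M + 2*j = D" "j \<le> J"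
    by blast
  have "j \<le> J'" using g(5) assms by simp
  then show "g \<in> {(\<lambda>Z. t M q s Z * N Z ^ j) | M q s j. q \<le> M \<and> s \<le> M \<and> M + 2*j = D \<and> j \<le> J'}"
    unfolding g(1) using g(2-4) by blast
qed



lemma t0: "t 0 0 r Z = (if r = 0 then 1 else 0)" by (rule t_zero)

lemma CG: "p \<le> L \<Longrightarrow> p' \<le> L' \<Longrightarrow> (\<lambda>Z. t L p r Z * t L' p' r' Z) \<in> SS (L+L') L'"
proof (induction L' arbitrary: p' r')
  case 0
  then have p': "p' = 0" by simp
  show ?case
  proof (cases "r' = 0")
    case True
    then have "(\<lambda>Z. t L p r Z * t 0 p' r' Z) = (\<lambda>Z. t L p r Z * N Z ^ 0)"
      using p' by (simp add: t0)
    moreover have "(\<lambda>Z. t L p r Z * N Z ^ 0) \<in> SS (L+0) 0" using 0 by (intro gen_SS) auto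
    ultimately show ?thesis by simp
  next
    case False
    then have "(\<lambda>Z. t L p r Z * t 0 p' r' Z) = (\<lambda>_. 0)"
      using p' by (simp add: t0)
    then show ?thesis unfolding SS_def using cspan_zero by metis
  qed
next
  case (Suc L')
  have LL: "L + Suc L' = Suc (L + L')" by simp
  show ?case
  proof (cases p')
    case 0
    have e: "t (Suc L') p' r' Z = Z$2$2 * t L' 0 r' Z + (if r' = 0 then 0 else Z$1$2 * t L' 0 (r'-1) Z)" for Z
      using t_z22[of 0 L' r' Z] 0 by simp
    have i1: "(\<lambda>Z. Z$2$2 * (t L p r Z * t L' 0 r' Z)) \<in> SS (Suc (L + L')) (Suc L')"
      by (rule SS_z22) (rule Suc.IH, use Suc.prems in auto)
    have i2: "(\<lambda>Z. Z$1$2 * (t L p r Z * t L' 0 (r'-1) Z)) \<in> SS (Suc (L + L')) (Suc L')"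
      by (rule SS_z12) (rule Suc.IH, use Suc.prems in auto)
    show ?thesis
    proof (cases "r' = 0")
      case True
      then show ?thesis unfolding LL e using i1 by (simp add: algebra_simps)
    next
      case False
      have "(\<lambda>Z. t L p r Z * t (Suc L') p' r' Z) = (\<lambda>Z. Z$2$2 * (t L p r Z * t L' 0 r' Z) + Z$1$2 * (t L p r Z * t L' 0 (r'-1) Z))"
        unfolding e using False by (simp add: algebra_simps)
      then show ?thesis unfolding LL using SS_add[OF i1 i2] by simp
    qed
  next
    case (Suc p'')
    then have pp: "p'' \<le> L'" using Suc.prems by simp
    have e: "t (Suc L') p' r' Z = Z$2$1 * t L' p'' r' Z + (if r' = 0 then 0 else Z$1$1 * t L' p'' (r'-1) Z)" for Z
      using t_z21[OF pp, of r' Z] Suc by simp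
    have i1: "(\<lambda>Z. Z$2$1 * (t L p r Z * t L' p'' r' Z)) \<in> SS (Suc (L + L')) (Suc L')"
      by (rule SS_z21) (rule Suc.IH, use Suc.prems pp in auto)
    have i2: "(\<lambda>Z. Z$1$1 * (t L p r Z * t L' p'' (r'-1) Z)) \<in> SS (Suc (L + L')) (Suc L')"
      by (rule SS_z11) (rule Suc.IH, use Suc.prems pp in auto)
    show ?thesis
    proof (cases "r' = 0")
      case True
      then show ?thesis unfolding LL e using i1 by (simp add: algebra_simps)
    next
      case False
      have "(\<lambda>Z. t L p r Z * t (Suc L') p' r' Z) = (\<lambda>Z. Z$2$1 * (t L p r Z * t L' p'' r' Z) + Z$1$1 * (t L p r Z * t L' p'' (r'-1) Z))"
        unfolding e using False by (simp add: algebra_simps)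
      then show ?thesis unfolding LL using SS_add[OF i1 i2] by simp
    qed
  qed
qed

lemma CG_min: assumes "p \<le> L" "p' \<le> L'"
  shows "(\<lambda>Z. t L p r Z * t L' p' r' Z) \<in> SS (L+L') (min L L')"
proof (cases "L' \<le> L")
  case True
  then have "min L L' = L'" by simp
  then show ?thesis using CG[OF assms] by simp
next
  case False
  have "(\<lambda>Z. t L' p' r' Z * t L p r Z) \<in> SS (L'+L) L" using CG[OF assms(2,1)] .
  moreover have "min L L' = L" using False by simp
  ultimately show ?thesis by (simp add: add.commute mult.commute)
qed



lemma powi_pow: assumes "int j + k < 0" shows "(x::complex) powi k * x ^ j = x powi (int j + k)"
proof (cases "x = 0")
  case True
  then show ?thesis using assms by (auto simp: power_int_0_left_if)
next
  case False
  then show ?thesis by (simp add: power_int_add)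
qed

lemma powi_powi: assumes "a < 0" "b < 0" shows "(x::complex) powi a * x powi b = x powi (a + b)"
proof -
  have "x \<noteq> 0 \<or> a + b \<noteq> 0" using assms by simp
  then show ?thesis by (simp add: power_int_add)
qed

definition Mon :: "nat \<Rightarrow> (cmat \<Rightarrow> complex) set" where
  "Mon D = cspan {(\<lambda>Z. Z$1$1^a * Z$1$2^b * Z$2$1^c * Z$2$2^e) | a b c e. a+b+c+e = D}"

lemma mon_mem: "a+b+c+e = D \<Longrightarrow> (\<lambda>Z. Z$1$1^a * Z$1$2^b * Z$2$1^c * Z$2$2^e) \<in> Mon D"
  unfolding Mon_def by (intro cspan_base) blast

lemma Mon_mult:
  assumes "\<And>a b c e. a+b+c+e = D \<Longrightarrow> (\<lambda>Z. h Z * (Z$1$1^a * Z$1$2^b * Z$2$1^c * Z$2$2^e)) \<in> Mon D'"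
    and "f \<in> Mon D"
  shows "(\<lambda>Z. h Z * f Z) \<in> Mon D'"
proof -
  have "(\<lambda>Z. h Z * g Z) \<in> Mon D'"
    if "g \<in> {(\<lambda>Z. Z$1$1^a * Z$1$2^b * Z$2$1^c * Z$2$2^e) | a b c e. a+b+c+e = D}" for g
  proof -
    from that obtain a b c e where g: "g = (\<lambda>Z. Z$1$1^a * Z$1$2^b * Z$2$1^c * Z$2$2^e)" "a+b+c+e = D"
      by blast
    show ?thesis unfolding g(1) using g(2) by (rule assms(1))
  qed
  then show ?thesis using assms(2) unfolding Mon_def[of D] Mon_def[of D']
    by (rule cspan_mult)
qed

lemma Mon_z11: "f \<in> Mon D \<Longrightarrow> (\<lambda>Z. Z$1$1 * f Z) \<in> Mon (Suc D)"
proof (rule Mon_mult)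
  fix a b c e assume "a+b+c+e = D"
  then have "(\<lambda>Z. Z$1$1^(Suc a) * Z$1$2^b * Z$2$1^c * Z$2$2^e) \<in> Mon (Suc D)" by (intro mon_mem) simp
  then show "(\<lambda>Z. Z$1$1 * (Z$1$1^a * Z$1$2^b * Z$2$1^c * Z$2$2^e)) \<in> Mon (Suc D)" by (simp add: ac_simps)
qed
lemma Mon_z12: "f \<in> Mon D \<Longrightarrow> (\<lambda>Z. Z$1$2 * f Z) \<in> Mon (Suc D)"
proof (rule Mon_mult)
  fix a b c e assume "a+b+c+e = D"
  then have "(\<lambda>Z. Z$1$1^a * Z$1$2^(Suc b) * Z$2$1^c * Z$2$2^e) \<in> Mon (Suc D)" by (intro mon_mem) simp
  then show "(\<lambda>Z. Z$1$2 * (Z$1$1^a * Z$1$2^b * Z$2$1^c * Z$2$2^e)) \<in> Mon (Suc D)" by (simp add: ac_simps)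
qed
lemma Mon_z21: "f \<in> Mon D \<Longrightarrow> (\<lambda>Z. Z$2$1 * f Z) \<in> Mon (Suc D)"
proof (rule Mon_mult)
  fix a b c e assume "a+b+c+e = D"
  then have "(\<lambda>Z. Z$1$1^a * Z$1$2^b * Z$2$1^(Suc c) * Z$2$2^e) \<in> Mon (Suc D)" by (intro mon_mem) simp
  then show "(\<lambda>Z. Z$2$1 * (Z$1$1^a * Z$1$2^b * Z$2$1^c * Z$2$2^e)) \<in> Mon (Suc D)" by (simp add: ac_simps)
qed
lemma Mon_z22: "f \<in> Mon D \<Longrightarrow> (\<lambda>Z. Z$2$2 * f Z) \<in> Mon (Suc D)"
proof (rule Mon_mult)
  fix a b c e assume "a+b+c+e = D"
  then have "(\<lambda>Z. Z$1$1^a * Z$1$2^b * Z$2$1^c * Z$2$2^(Suc e)) \<in> Mon (Suc D)" by (intro mon_mem) simp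
  then show "(\<lambda>Z. Z$2$2 * (Z$1$1^a * Z$1$2^b * Z$2$1^c * Z$2$2^e)) \<in> Mon (Suc D)" by (simp add: ac_simps)
qed

lemma Mon_add: "f \<in> Mon D \<Longrightarrow> g \<in> Mon D \<Longrightarrow> (\<lambda>Z. f Z + g Z) \<in> Mon D"
  unfolding Mon_def by (rule cspan_add)
lemma Mon_diff: "f \<in> Mon D \<Longrightarrow> g \<in> Mon D \<Longrightarrow> (\<lambda>Z. f Z - g Z) \<in> Mon D"
  unfolding Mon_def by (rule cspan_diff)

lemma t_Mon: "p \<le> M \<Longrightarrow> t M p r \<in> Mon M"
proof (induction M arbitrary: p r)
  case 0
  then have p: "p = 0" by simp
  show ?case
  proof (cases "r = 0")
    case True
    have "(\<lambda>Z. Z$1$1^0 * Z$1$2^0 * Z$2$1^0 * Z$2$2^0) \<in> Mon 0" by (rule mon_mem) simp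
    moreover have "t 0 p r = (\<lambda>Z. Z$1$1^0 * Z$1$2^0 * Z$2$1^0 * Z$2$2^0)"
      using True p by (simp add: fun_eq_iff t_zero)
    ultimately show ?thesis by simp
  next
    case False
    then have "t 0 p r = (\<lambda>_. 0)" using p by (simp add: fun_eq_iff t_zero)
    then show ?thesis unfolding Mon_def by (simp add: cspan_zero)
  qed
next
  case (Suc M)
  show ?case
  proof (cases p)
    case 0
    have e: "t (Suc M) p r Z = Z$2$2 * t M 0 r Z + (if r = 0 then 0 else Z$1$2 * t M 0 (r-1) Z)" for Z
      using t_z22[of 0 M r Z] 0 by simp
    have i1: "(\<lambda>Z. Z$2$2 * t M 0 r Z) \<in> Mon (Suc M)" by (rule Mon_z22) (rule Suc.IH, simp)
    have i2: "(\<lambda>Z. Z$1$2 * t M 0 (r-1) Z) \<in> Mon (Suc M)" by (rule Mon_z12) (rule Suc.IH, simp)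
    show ?thesis
    proof (cases "r = 0")
      case True
      then have "t (Suc M) p r = (\<lambda>Z. Z$2$2 * t M 0 r Z)" using e by (simp add: fun_eq_iff)
      then show ?thesis using i1 by simp
    next
      case False
      then have "t (Suc M) p r = (\<lambda>Z. Z$2$2 * t M 0 r Z + Z$1$2 * t M 0 (r-1) Z)" using e by (simp add: fun_eq_iff)
      then show ?thesis using Mon_add[OF i1 i2] by simp
    qed
  next
    case (Suc p')
    then have pp: "p' \<le> M" using Suc.prems by simp
    have e: "t (Suc M) p r Z = Z$2$1 * t M p' r Z + (if r = 0 then 0 else Z$1$1 * t M p' (r-1) Z)" for Z
      using t_z21[OF pp, of r Z] Suc by simp
    have i1: "(\<lambda>Z. Z$2$1 * t M p' r Z) \<in> Mon (Suc M)" by (rule Mon_z21) (rule Suc.IH[OF pp])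
    have i2: "(\<lambda>Z. Z$1$1 * t M p' (r-1) Z) \<in> Mon (Suc M)" by (rule Mon_z11) (rule Suc.IH[OF pp])
    show ?thesis
    proof (cases "r = 0")
      case True
      then have "t (Suc M) p r = (\<lambda>Z. Z$2$1 * t M p' r Z)" using e by (simp add: fun_eq_iff)
      then show ?thesis using i1 by simp
    next
      case False
      then have "t (Suc M) p r = (\<lambda>Z. Z$2$1 * t M p' r Z + Z$1$1 * t M p' (r-1) Z)" using e by (simp add: fun_eq_iff)
      then show ?thesis using Mon_add[OF i1 i2] by simp
    qed
  qed
qed

lemma N_Mon: "f \<in> Mon D \<Longrightarrow> (\<lambda>Z. N Z * f Z) \<in> Mon (Suc (Suc D))"
proof -
  assume f: "f \<in> Mon D"
  have "(\<lambda>Z. Z$1$1 * (Z$2$2 * f Z) - Z$1$2 * (Z$2$1 * f Z)) \<in> Mon (Suc (Suc D))"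
    by (intro Mon_diff Mon_z11 Mon_z12 Mon_z22 Mon_z21 f)
  moreover have "(\<lambda>Z. N Z * f Z) = (\<lambda>Z. Z$1$1 * (Z$2$2 * f Z) - Z$1$2 * (Z$2$1 * f Z))"
    by (simp add: fun_eq_iff N_eq algebra_simps)
  ultimately show ?thesis by simp
qed

lemma tN_Mon: "p \<le> M \<Longrightarrow> (\<lambda>Z. t M p r Z * N Z ^ j) \<in> Mon (M + 2*j)"
proof (induction j)
  case 0 then show ?case using t_Mon[of p M r] by simp
next
  case (Suc j)
  have "(\<lambda>Z. N Z * (t M p r Z * N Z ^ j)) \<in> Mon (Suc (Suc (M + 2*j)))"
    by (rule N_Mon) (rule Suc.IH[OF Suc.prems])
  moreover have "Suc (Suc (M + 2*j)) = M + 2 * Suc j" by simp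
  ultimately show ?case by (simp add: ac_simps)
qed

definition RR :: "nat \<Rightarrow> (cmat \<Rightarrow> complex) set" where
  "RR D = cspan {(\<lambda>Z. t a p r Z * t b p' r' Z) | a p r b p' r'. p \<le> a \<and> r \<le> a \<and> p' \<le> b \<and> r' \<le> b \<and> a + b = D}"

lemma Mon_RR: "Mon D \<subseteq> RR D"
  unfolding Mon_def RR_def
proof (rule cspan_subset, rule subsetI)
  fix g :: "cmat \<Rightarrow> complex" assume "g \<in> {(\<lambda>Z. Z$1$1^a * Z$1$2^b * Z$2$1^c * Z$2$2^e) | a b c e. a+b+c+e = D}"
  then obtain a b c e where g: "g = (\<lambda>Z. Z$1$1^a * Z$1$2^b * Z$2$1^c * Z$2$2^e)" "a+b+c+e = D"
    by blast
  have "g = (\<lambda>Z. t (a+b) a (a+b) Z * t (c+e) c 0 Z)"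
    unfolding g(1) t_top t_bot by (simp add: ac_simps)
  moreover have "(\<lambda>Z. t (a+b) a (a+b) Z * t (c+e) c 0 Z) \<in> {(\<lambda>Z. t a p r Z * t b p' r' Z) | a p r b p' r'. p \<le> a \<and> r \<le> a \<and> p' \<le> b \<and> r' \<le> b \<and> a + b = D}"
    using g(2) by (intro CollectI exI[of _ "a+b"] exI[of _ a] exI[of _ "a+b"] exI[of _ "c+e"] exI[of _ c] exI[of _ 0]) simp
  ultimately show "g \<in> cspan {(\<lambda>Z. t a p r Z * t b p' r' Z) | a p r b p' r'. p \<le> a \<and> r \<le> a \<and> p' \<le> b \<and> r' \<le> b \<and> a + b = D}"
    by (simp add: cspan_base)
qed



definition GP :: "(cmat \<Rightarrow> complex) set" where "GP = {t L p r | L p r. p \<le> L \<and> r \<le> L}"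
definition GM :: "(cmat \<Rightarrow> complex) set" where
  "GM = {(\<lambda>Z. t L p r Z * N Z powi (- (int L + 1))) | L p r. p \<le> L \<and> r \<le> L}"

lemma powi_nonneg: assumes "0 \<le> k" shows "(x::complex) powi k = x ^ nat k"
proof -
  have "x powi k = x powi (int (nat k))" by (simp only: nat_0_le[OF assms])
  also have "\<dots> = x ^ nat k" by (rule power_int_of_nat)
  finally show ?thesis .
qed

lemma Hplus_GP: "Hplus = cspan GP" unfolding Hplus_def GP_def ..
lemma Hminus_GM: "Hminus = cspan GM" unfolding Hminus_def GM_def ..

lemma GP_mem: "p \<le> L \<Longrightarrow> r \<le> L \<Longrightarrow> t L p r \<in> GP"
  unfolding GP_def by (intro CollectI exI[of _ L] exI[of _ p] exI[of _ r]) simp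
lemma GM_mem: "p \<le> L \<Longrightarrow> r \<le> L \<Longrightarrow> (\<lambda>Z. t L p r Z * N Z powi (- (int L + 1))) \<in> GM"
  unfolding GM_def by (intro CollectI exI[of _ L] exI[of _ p] exI[of _ r]) simp
lemma PR_mem: "f \<in> A \<Longrightarrow> g \<in> B \<Longrightarrow> (\<lambda>x. f x * g x) \<in> {(\<lambda>x. f x * g x) | f g. f \<in> A \<and> g \<in> B}"
  by blast

lemma Zplus_mem: "p \<le> L \<Longrightarrow> r \<le> L \<Longrightarrow> 0 \<le> k \<Longrightarrow> (\<lambda>Z. t L p r Z * N Z powi k) \<in> Zh_plus"
  unfolding Zh_plus_def by (intro cspan_base CollectI exI[of _ L] exI[of _ p] exI[of _ r] exI[of _ k]) simp
lemma Zminus_mem: "p \<le> L \<Longrightarrow> r \<le> L \<Longrightarrow> k \<le> - (int L + 2) \<Longrightarrow> (\<lambda>Z. t L p r Z * N Z powi k) \<in> Zh_minus"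
  unfolding Zh_minus_def by (intro cspan_base CollectI exI[of _ L] exI[of _ p] exI[of _ r] exI[of _ k]) simp
lemma Zzero_mem: "p \<le> L \<Longrightarrow> r \<le> L \<Longrightarrow> - (int L + 1) \<le> k \<Longrightarrow> k \<le> -1 \<Longrightarrow> (\<lambda>Z. t L p r Z * N Z powi k) \<in> Zh_zero"
  unfolding Zh_zero_def by (intro cspan_base CollectI exI[of _ L] exI[of _ p] exI[of _ r] exI[of _ k]) simp

lemma SS_cases:
  assumes "g \<in> {(\<lambda>Z. t M q s Z * N Z ^ j) | M q s j. q \<le> M \<and> s \<le> M \<and> M + 2*j = D \<and> j \<le> J}"
  obtains M q s j where "g = (\<lambda>Z. t M q s Z * N Z ^ j)" "q \<le> M" "s \<le> M" "M + 2*j = D" "j \<le> J"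
  using assms by blast

lemma SS_Zplus: "SS D J \<subseteq> Zh_plus"
  unfolding SS_def Zh_plus_def[symmetric]
proof (rule cspan_subset[of _ "{(\<lambda>Z. t L p r Z * N Z powi k) | L p r k. p \<le> L \<and> r \<le> L \<and> 0 \<le> k}", folded Zh_plus_def], rule subsetI)
  fix g assume "g \<in> {(\<lambda>Z. t M q s Z * N Z ^ j) | M q s j. q \<le> M \<and> s \<le> M \<and> M + 2*j = D \<and> j \<le> J}"
  then obtain M q s j where g: "g = (\<lambda>Z. t M q s Z * N Z ^ j)" "q \<le> M" "s \<le> M"
    by (rule SS_cases)
  have "g = (\<lambda>Z. t M q s Z * N Z powi (int j))" unfolding g(1) by simp
  then show "g \<in> Zh_plus" using Zplus_mem[OF g(2,3), of "int j"] by simp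
qed

lemma GP_cases: assumes "f \<in> GP" obtains L p r where "f = t L p r" "p \<le> L" "r \<le> L"
  using assms unfolding GP_def by blast
lemma GM_cases: assumes "f \<in> GM"
  obtains L p r where "f = (\<lambda>Z. t L p r Z * N Z powi (- (int L + 1)))" "p \<le> L" "r \<le> L"
  using assms unfolding GM_def by blast
lemma PR_cases: assumes "F \<in> {(\<lambda>x. f x * g x) | f g. f \<in> A \<and> g \<in> B}"
  obtains f g where "F = (\<lambda>x. f x * g x)" "f \<in> A" "g \<in> B"
  using assms by blast

lemma GPGP_cases:
  assumes "F \<in> {(\<lambda>x. f x * g x) | f g. f \<in> GP \<and> g \<in> GP}"
  obtains L p r L' p' r' where "F = (\<lambda>Z. t L p r Z * t L' p' r' Z)" "p \<le> L" "r \<le> L" "p' \<le> L'" "r' \<le> L'"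
proof -
  obtain f g where F: "F = (\<lambda>x. f x * g x)" "f \<in> GP" "g \<in> GP" using assms by (rule PR_cases)
  obtain L p r where f: "f = t L p r" "p \<le> L" "r \<le> L" using F(2) by (rule GP_cases)
  obtain L' p' r' where g: "g = t L' p' r'" "p' \<le> L'" "r' \<le> L'" using F(3) by (rule GP_cases)
  show thesis by (rule that[of L p r L' p' r']) (simp_all add: F(1) f g)
qed
lemma GMGP_cases:
  assumes "F \<in> {(\<lambda>x. f x * g x) | f g. f \<in> GM \<and> g \<in> GP}"
  obtains L p r L' p' r' where "F = (\<lambda>Z. (t L p r Z * N Z powi (- (int L + 1))) * t L' p' r' Z)" "p \<le> L" "r \<le> L" "p' \<le> L'" "r' \<le> L'"
proof -
  obtain f g where F: "F = (\<lambda>x. f x * g x)" "f \<in> GM" "g \<in> GP" using assms by (rule PR_cases)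
  obtain L p r where f: "f = (\<lambda>Z. t L p r Z * N Z powi (- (int L + 1)))" "p \<le> L" "r \<le> L" using F(2) by (rule GM_cases)
  obtain L' p' r' where g: "g = t L' p' r'" "p' \<le> L'" "r' \<le> L'" using F(3) by (rule GP_cases)
  show thesis by (rule that[of L p r L' p' r']) (simp_all add: F(1) f g)
qed
lemma GMGM_cases:
  assumes "F \<in> {(\<lambda>x. f x * g x) | f g. f \<in> GM \<and> g \<in> GM}"
  obtains L p r L' p' r' where "F = (\<lambda>Z. (t L p r Z * N Z powi (- (int L + 1))) * (t L' p' r' Z * N Z powi (- (int L' + 1))))" "p \<le> L" "r \<le> L" "p' \<le> L'" "r' \<le> L'"
proof -
  obtain f g where F: "F = (\<lambda>x. f x * g x)" "f \<in> GM" "g \<in> GM" using assms by (rule PR_cases)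
  obtain L p r where f: "f = (\<lambda>Z. t L p r Z * N Z powi (- (int L + 1)))" "p \<le> L" "r \<le> L" using F(2) by (rule GM_cases)
  obtain L' p' r' where g: "g = (\<lambda>Z. t L' p' r' Z * N Z powi (- (int L' + 1)))" "p' \<le> L'" "r' \<le> L'" using F(3) by (rule GM_cases)
  show thesis by (rule that[of L p r L' p' r']) (simp_all add: F(1) f g)
qed

lemma RR_cases:
  assumes "g \<in> {(\<lambda>Z. t a p r Z * t b p' r' Z) | a p r b p' r'. p \<le> a \<and> r \<le> a \<and> p' \<le> b \<and> r' \<le> b \<and> a + b = D}"
  obtains a p r b p' r' where "g = (\<lambda>Z. t a p r Z * t b p' r' Z)" "p \<le> a" "r \<le> a" "p' \<le> b" "r' \<le> b" "a + b = D"
  using assms by blast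

lemma RR_PP: "RR D \<subseteq> cspan {(\<lambda>x. f x * g x) | f g. f \<in> GP \<and> g \<in> GP}"
  unfolding RR_def
proof (rule cspan_mono, rule subsetI)
  fix g assume "g \<in> {(\<lambda>Z. t a p r Z * t b p' r' Z) | a p r b p' r'. p \<le> a \<and> r \<le> a \<and> p' \<le> b \<and> r' \<le> b \<and> a + b = D}"
  then obtain a p r b p' r' where g: "g = (\<lambda>Z. t a p r Z * t b p' r' Z)" "p \<le> a" "r \<le> a" "p' \<le> b" "r' \<le> b"
    by (rule RR_cases)
  show "g \<in> {(\<lambda>x. f x * g x) | f g. f \<in> GP \<and> g \<in> GP}"
    unfolding g(1) by (rule PR_mem) (use g GP_mem in auto)
qed

theorem part1: "prodspan Hplus Hplus = Zh_plus"
proof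
  show "prodspan Hplus Hplus \<subseteq> Zh_plus"
    unfolding Hplus_GP prodspan_cspan Zh_plus_def
  proof (rule cspan_subset, rule subsetI)
    fix F assume "F \<in> {(\<lambda>x. f x * g x) | f g. f \<in> GP \<and> g \<in> GP}"
    then obtain L p r L' p' r' where F: "F = (\<lambda>Z. t L p r Z * t L' p' r' Z)" "p \<le> L" "p' \<le> L'"
      by (rule GPGP_cases)
    show "F \<in> cspan {(\<lambda>Z. t L p r Z * N Z powi k) | L p r k. p \<le> L \<and> r \<le> L \<and> 0 \<le> k}"
      using subsetD[OF SS_Zplus CG[OF F(2,3)]] unfolding F(1) Zh_plus_def .
  qed
  show "Zh_plus \<subseteq> prodspan Hplus Hplus"
    unfolding Hplus_GP prodspan_cspan Zh_plus_def
  proof (rule cspan_subset, rule subsetI)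
    fix g assume "g \<in> {(\<lambda>Z. t L p r Z * N Z powi k) | L p r k. p \<le> L \<and> r \<le> L \<and> 0 \<le> k}"
    then obtain L p r k where g: "g = (\<lambda>Z. t L p r Z * N Z powi k)" "p \<le> L" "0 \<le> k" by blast
    have "g = (\<lambda>Z. t L p r Z * N Z ^ nat k)" unfolding g(1) using g(3) by (simp add: fun_eq_iff powi_nonneg)
    moreover have "(\<lambda>Z. t L p r Z * N Z ^ nat k) \<in> Mon (L + 2 * nat k)" by (rule tN_Mon[OF g(2)])
    ultimately show "g \<in> cspan {(\<lambda>x. f x * g x) | f g. f \<in> GP \<and> g \<in> GP}"
      using subsetD[OF RR_PP subsetD[OF Mon_RR]] by simp
  qed
qed



theorem part3: "prodspan Hminus Hplus = Zh_zero"
proof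
  show "prodspan Hminus Hplus \<subseteq> Zh_zero"
    unfolding Hminus_GM Hplus_GP prodspan_cspan Zh_zero_def
  proof (rule cspan_subset, rule subsetI)
    fix F assume "F \<in> {(\<lambda>x. f x * g x) | f g. f \<in> GM \<and> g \<in> GP}"
    then obtain L p r L' p' r' where F: "F = (\<lambda>Z. (t L p r Z * N Z powi (- (int L + 1))) * t L' p' r' Z)"
       "p \<le> L" "r \<le> L" "p' \<le> L'" "r' \<le> L'"
      by (rule GMGP_cases)
    have F': "F = (\<lambda>Z. N Z powi (- (int L + 1)) * (t L p r Z * t L' p' r' Z))"
      unfolding F(1) by (simp add: ac_simps)
    have gen: "(\<lambda>Z. N Z powi (- (int L + 1)) * g Z) \<in> Zh_zero"
      if gi: "g \<in> {(\<lambda>Z. t M q s Z * N Z ^ j) | M q s j. q \<le> M \<and> s \<le> M \<and> M + 2*j = L + L' \<and> j \<le> min L L'}" for g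
    proof -
      obtain M q s j where g: "g = (\<lambda>Z. t M q s Z * N Z ^ j)" "q \<le> M" "s \<le> M" "M + 2*j = L + L'" "j \<le> min L L'"
        using gi by (rule SS_cases)
      have lt: "int j + (- (int L + 1)) < 0" using g(5) by simp
      have "(\<lambda>Z. N Z powi (- (int L + 1)) * g Z) = (\<lambda>Z. t M q s Z * N Z powi (int j + (- (int L + 1))))"
        unfolding g(1) using powi_pow[OF lt] by (simp add: fun_eq_iff ac_simps)
      moreover have "(\<lambda>Z. t M q s Z * N Z powi (int j + (- (int L + 1)))) \<in> Zh_zero"
        using g(2-5) by (intro Zzero_mem) auto
      ultimately show ?thesis by simp
    qed
    have "(\<lambda>Z. N Z powi (- (int L + 1)) * (t L p r Z * t L' p' r' Z)) \<in> Zh_zero"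
      using gen CG_min[OF F(2,4), of r r'] unfolding SS_def Zh_zero_def by (rule cspan_mult)
    then show "F \<in> cspan {(\<lambda>Z. t L p r Z * N Z powi k) | L p r k.
      p \<le> L \<and> r \<le> L \<and> - (int L + 1) \<le> k \<and> k \<le> -1}" unfolding F' Zh_zero_def .
  qed
  show "Zh_zero \<subseteq> prodspan Hminus Hplus"
    unfolding Hminus_GM Hplus_GP prodspan_cspan Zh_zero_def
  proof (rule cspan_subset, rule subsetI)
    fix g assume "g \<in> {(\<lambda>Z. t L p r Z * N Z powi k) | L p r k.
      p \<le> L \<and> r \<le> L \<and> - (int L + 1) \<le> k \<and> k \<le> -1}"
    then obtain M q s k where g: "g = (\<lambda>Z. t M q s Z * N Z powi k)" "q \<le> M" "s \<le> M" "- (int M + 1) \<le> k" "k \<le> -1"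
      by blast
    define L where "L = nat (- k - 1)"
    define K where "K = M - L"
    define p1 where "p1 = min q L"
    define p2 where "p2 = q - p1"
    have LM: "L \<le> M" using g(4,5) unfolding L_def by simp
    have kL: "k = - (int L + 1)" using g(5) unfolding L_def by simp
    have hML: "M = L + K" using LM unfolding K_def by simp
    have qp: "q = p1 + p2" unfolding p1_def p2_def by simp
    have p1L: "p1 \<le> L" unfolding p1_def by simp
    have p2L: "p2 \<le> K" using g(2) hML unfolding p1_def p2_def by auto
    have ts: "t M q s Z = (\<Sum>i\<le>s. t L p1 i Z * t K p2 (s-i) Z)" for Z
      unfolding hML qp by (rule t_split[OF p1L p2L])
    have "g = (\<lambda>Z. \<Sum>i\<le>s. (t L p1 i Z * N Z powi (- (int L + 1))) * t K p2 (s-i) Z)"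
      unfolding g(1) ts kL by (simp add: fun_eq_iff sum_distrib_left ac_simps)
    moreover have "(\<lambda>Z. \<Sum>i\<le>s. (t L p1 i Z * N Z powi (- (int L + 1))) * t K p2 (s-i) Z)
       \<in> cspan {(\<lambda>x. f x * g x) | f g. f \<in> GM \<and> g \<in> GP}"
    proof (rule cspan_sum)
      fix i assume "i \<in> {..s}"
      show "(\<lambda>Z. (t L p1 i Z * N Z powi (- (int L + 1))) * t K p2 (s-i) Z) \<in> cspan {(\<lambda>x. f x * g x) | f g. f \<in> GM \<and> g \<in> GP}"
      proof (cases "i \<le> L \<and> s - i \<le> K")
        case True
        have a: "(\<lambda>Z. t L p1 i Z * N Z powi (- (int L + 1))) \<in> GM"
          by (rule GM_mem[OF p1L]) (use True in simp)
        have b: "t K p2 (s-i) \<in> GP" by (rule GP_mem[OF p2L]) (use True in simp)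
        show ?thesis using PR_mem[OF a b] by (rule cspan_base)
      next
        case False
        then have "(\<lambda>Z. (t L p1 i Z * N Z powi (- (int L + 1))) * t K p2 (s-i) Z) = (\<lambda>_. 0)"
          using t_high[OF p1L, of i] t_high[OF p2L, of "s-i"] by (auto simp: fun_eq_iff)
        then show ?thesis by (simp add: cspan_zero)
      qed
    qed simp
    ultimately show "g \<in> cspan {(\<lambda>x. f x * g x) | f g. f \<in> GM \<and> g \<in> GP}" by simp
  qed
qed



theorem part2: "prodspan Hminus Hminus = Zh_minus"
proof
  show "prodspan Hminus Hminus \<subseteq> Zh_minus"
    unfolding Hminus_GM prodspan_cspan Zh_minus_def
  proof (rule cspan_subset, rule subsetI)
    fix F assume "F \<in> {(\<lambda>x. f x * g x) | f g. f \<in> GM \<and> g \<in> GM}"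
    then obtain L p r L' p' r' where F: "F = (\<lambda>Z. (t L p r Z * N Z powi (- (int L + 1))) * (t L' p' r' Z * N Z powi (- (int L' + 1))))"
       "p \<le> L" "r \<le> L" "p' \<le> L'" "r' \<le> L'"
      by (rule GMGM_cases)
    have ex: "(- (int L + 1)) + (- (int L' + 1)) = - (int (L + L') + 2)" by simp
    have pp: "N Z powi (- (int L + 1)) * N Z powi (- (int L' + 1)) = N Z powi (- (int (L + L') + 2))" for Z
      unfolding ex[symmetric] by (rule powi_powi) simp_all
    have F': "F = (\<lambda>Z. N Z powi (- (int (L + L') + 2)) * (t L p r Z * t L' p' r' Z))"
      unfolding F(1) pp[symmetric] by (simp add: ac_simps)
    have gen: "(\<lambda>Z. N Z powi (- (int (L + L') + 2)) * g Z) \<in> Zh_minus"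
      if gi: "g \<in> {(\<lambda>Z. t M q s Z * N Z ^ j) | M q s j. q \<le> M \<and> s \<le> M \<and> M + 2*j = L + L' \<and> j \<le> L'}" for g
    proof -
      obtain M q s j where g: "g = (\<lambda>Z. t M q s Z * N Z ^ j)" "q \<le> M" "s \<le> M" "M + 2*j = L + L'" "j \<le> L'"
        using gi by (rule SS_cases)
      have lt: "int j + (- (int (L + L') + 2)) < 0" using g(4) by simp
      have "(\<lambda>Z. N Z powi (- (int (L + L') + 2)) * g Z) = (\<lambda>Z. t M q s Z * N Z powi (int j + (- (int (L + L') + 2))))"
        unfolding g(1) using powi_pow[OF lt] by (simp add: fun_eq_iff ac_simps)
      moreover have "(\<lambda>Z. t M q s Z * N Z powi (int j + (- (int (L + L') + 2)))) \<in> Zh_minus"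
        using g(2-5) by (intro Zminus_mem) auto
      ultimately show ?thesis by simp
    qed
    have "(\<lambda>Z. N Z powi (- (int (L + L') + 2)) * (t L p r Z * t L' p' r' Z)) \<in> Zh_minus"
      using gen CG[OF F(2,4), of r r'] unfolding SS_def Zh_minus_def by (rule cspan_mult)
    then show "F \<in> cspan {(\<lambda>Z. t L p r Z * N Z powi k) | L p r k.
      p \<le> L \<and> r \<le> L \<and> k \<le> - (int L + 2)}" unfolding F' Zh_minus_def .
  qed
  show "Zh_minus \<subseteq> prodspan Hminus Hminus"
    unfolding Hminus_GM prodspan_cspan Zh_minus_def
  proof (rule cspan_subset, rule subsetI)
    fix g assume "g \<in> {(\<lambda>Z. t L p r Z * N Z powi k) | L p r k.
      p \<le> L \<and> r \<le> L \<and> k \<le> - (int L + 2)}"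
    then obtain M q s k where g: "g = (\<lambda>Z. t M q s Z * N Z powi k)" "q \<le> M" "s \<le> M" "k \<le> - (int M + 2)"
      by blast
    define j where "j = nat (- (int M + 2) - k)"
    define D where "D = M + 2 * j"
    have kj: "int j + (- (int D + 2)) = k" using g(4) unfolding j_def D_def by simp
    have lt: "int j + (- (int D + 2)) < 0" unfolding D_def by simp
    have mem: "(\<lambda>Z. t M q s Z * N Z ^ j) \<in> RR D" unfolding D_def
      by (rule subsetD[OF Mon_RR tN_Mon[OF g(2)]])
    have gen: "(\<lambda>Z. N Z powi (- (int D + 2)) * h Z) \<in> cspan {(\<lambda>x. f x * g x) | f g. f \<in> GM \<and> g \<in> GM}"
      if hi: "h \<in> {(\<lambda>Z. t a p r Z * t b p' r' Z) | a p r b p' r'. p \<le> a \<and> r \<le> a \<and> p' \<le> b \<and> r' \<le> b \<and> a + b = D}" for h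
    proof -
      obtain a p r b p' r' where h: "h = (\<lambda>Z. t a p r Z * t b p' r' Z)" "p \<le> a" "r \<le> a" "p' \<le> b" "r' \<le> b" "a + b = D"
        using hi by (rule RR_cases)
      have ex: "(- (int a + 1)) + (- (int b + 1)) = - (int D + 2)" using h(6) by auto
      have pp: "N Z powi (- (int a + 1)) * N Z powi (- (int b + 1)) = N Z powi (- (int D + 2))" for Z
        unfolding ex[symmetric] by (rule powi_powi) simp_all
      have e: "(\<lambda>Z. N Z powi (- (int D + 2)) * h Z) =
         (\<lambda>Z. (t a p r Z * N Z powi (- (int a + 1))) * (t b p' r' Z * N Z powi (- (int b + 1))))"
        unfolding h(1) pp[symmetric] by (simp add: fun_eq_iff ac_simps)
      have A: "(\<lambda>Z. t a p r Z * N Z powi (- (int a + 1))) \<in> GM" by (rule GM_mem[OF h(2,3)])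
      have B: "(\<lambda>Z. t b p' r' Z * N Z powi (- (int b + 1))) \<in> GM" by (rule GM_mem[OF h(4,5)])
      show ?thesis unfolding e using PR_mem[OF A B] by (rule cspan_base)
    qed
    have "(\<lambda>Z. N Z powi (- (int D + 2)) * (t M q s Z * N Z ^ j)) \<in> cspan {(\<lambda>x. f x * g x) | f g. f \<in> GM \<and> g \<in> GM}"
      using gen mem unfolding RR_def by (rule cspan_mult)
    moreover have "(\<lambda>Z. N Z powi (- (int D + 2)) * (t M q s Z * N Z ^ j)) = g"
      unfolding g(1) using powi_pow[OF lt] kj by (simp add: fun_eq_iff ac_simps)
    ultimately show "g \<in> cspan {(\<lambda>x. f x * g x) | f g. f \<in> GM \<and> g \<in> GM}" by simp
  qed
qed


theorem mainTheorem3: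
  shows "prodspan Hplus Hplus = Zh_plus
       \<and> prodspan Hminus Hminus = Zh_minus
       \<and> prodspan Hminus Hplus = Zh_zero"
  using part1 part2 part3 by blast

end
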